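(* Let $F$ be the infinite cyclic group with generator $a$ and identity $e$, let $k$ be a field and $kF$ the group algebra with multiplication $m$. Define a linear map $\Delta:kF\to kF\otimes kF$ by $$\Delta(e)=0,\quad \Delta(a)=e\otimes e,\quad \Delta(a^{-1})=-a^{-1}\otimes a^{-1},$$ $$\Delta(a^n)=(a\otimes 1)\Delta(a^{n-1})+e\otimes a^{n-1},\qquad \Delta(a^{-n})=-(a^{-n}\otimes 1)\Delta(a^n)(1\otimes a^{-n})\quad\text{for } n>1 .$$ Then $(kF,m,\Delta)$ is an $\epsilon$-bialgebra, i.e. $\Delta$ is coassociative, $(\Delta\otimes\mathrm{id})\Delta=(\mathrm{id}\otimes\Delta)\Delta$, and $\Delta(uv)=(u\otimes 1)\Delta(v)+\Delta(u)(1\otimes v)$ for all $u,v\in kF$.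
   Context: Here $1=e$ is the unit of $kF$, and products such as $(u\otimes 1)\Delta(v)$ are taken in the algebra $kF\otimes kF$. *)

theory Defs
  imports "HOL-Library.Poly_Mapping" "HOL-Library.Product_Plus"
begin

(* Model: F = (int,+) written additively, a^n is the key n.
  kF = int \<Rightarrow>\<^sub>0 'k (finitely supported functions, convolution product).
  kF \<otimes> kF is identified with k[F \<times> F] = (int \<times> int) \<Rightarrow>\<^sub>0 'k via a^i \<otimes> a^j \<mapsto> (i,j),
  and kF \<otimes> kF \<otimes> kF with (int \<times> int \<times> int) \<Rightarrow>\<^sub>0 'k. *)

type_synonym 'k kF = "int \<Rightarrow>\<^sub>0 'k"
type_synonym 'k kF2 = "(int \<times> int) \<Rightarrow>\<^sub>0 'k"
type_synonym 'k kF3 = "(int \<times> int \<times> int) \<Rightarrow>\<^sub>0 'k"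

definition gpow :: "int \<Rightarrow> 'k::field kF" where
  "gpow n = Poly_Mapping.single n 1"

definition tens :: "('a \<Rightarrow>\<^sub>0 'k::field) \<Rightarrow> ('b \<Rightarrow>\<^sub>0 'k) \<Rightarrow> ('a \<times> 'b \<Rightarrow>\<^sub>0 'k)" where
  "tens p q = (\<Sum>i\<in>Poly_Mapping.keys p. \<Sum>j\<in>Poly_Mapping.keys q. Poly_Mapping.single (i, j) (Poly_Mapping.lookup p i * Poly_Mapping.lookup q j))"

definition lin_ext :: "('a \<Rightarrow> ('b \<Rightarrow>\<^sub>0 'k::field)) \<Rightarrow> ('a \<Rightarrow>\<^sub>0 'k) \<Rightarrow> ('b \<Rightarrow>\<^sub>0 'k)" where
  "lin_ext f u = (\<Sum>x\<in>Poly_Mapping.keys u. \<Sum>y\<in>Poly_Mapping.keys (f x). Poly_Mapping.single y (Poly_Mapping.lookup u x * Poly_Mapping.lookup (f x) y))"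

fun delta_pos :: "nat \<Rightarrow> 'k::field kF2" where
  "delta_pos 0 = 0"
| "delta_pos (Suc 0) = tens (gpow 0) (gpow 0)"
| "delta_pos (Suc (Suc n)) =
     tens (gpow 1) 1 * delta_pos (Suc n) + tens (gpow 0) (gpow (int (Suc n)))"

definition delta_basis :: "int \<Rightarrow> 'k::field kF2" where
  "delta_basis n =
    (if n = 0 then 0
     else if n > 0 then delta_pos (nat n)
     else if n = -1 then - tens (gpow (-1)) (gpow (-1))
     else - (tens (gpow n) 1 * delta_pos (nat (-n)) * tens 1 (gpow n)))"

definition Delta :: "'k::field kF \<Rightarrow> 'k kF2" where
  "Delta = lin_ext delta_basis"

definition Delta_id :: "'k::field kF2 \<Rightarrow> 'k kF3" where
  "Delta_id = lin_ext (\<lambda>(i, j). lin_ext (\<lambda>(s, t). Poly_Mapping.single (s, t, j) 1) (Delta (gpow i)))"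

definition id_Delta :: "'k::field kF2 \<Rightarrow> 'k kF3" where
  "id_Delta = lin_ext (\<lambda>(i, j). lin_ext (\<lambda>(s, t). Poly_Mapping.single (i, s, t) 1) (Delta (gpow j)))"

end

theory Submission
  imports Defs
begin

abbreviation lk where "lk \<equiv> Poly_Mapping.lookup"

lemma collapse:
  fixes P :: "'a \<Rightarrow>\<^sub>0 'k::field"
  shows "(\<Sum>x\<in>Poly_Mapping.keys P. if x = c then lk P x * a else 0) = lk P c * a"
proof (cases "c \<in> Poly_Mapping.keys P")
  case True then show ?thesis by (simp add: sum.delta')
next
  case False then show ?thesis by (simp add: sum.delta' in_keys_iff)
qed

lemma collapse2:
  assumes "finite A" "finite B"
  shows "(\<Sum>a\<in>A. \<Sum>b\<in>B. if a = i \<and> b = j then g a b else 0) = (if i\<in>A \<and> j\<in>B then g i j else 0)"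
proof -
  have "\<And>a. (\<Sum>b\<in>B. if a = i \<and> b = j then g a b else 0) = (if a = i then (if j\<in>B then g a j else 0) else 0)"
    subgoal for a by (cases "a=i") (simp_all add: sum.delta' assms)
    done
  then show ?thesis by (simp add: sum.delta' assms)
qed

lemma lookup_lin_ext:
  "lk (lin_ext f u) y = (\<Sum>x\<in>Poly_Mapping.keys u. lk u x * lk (f x) y)"
proof -
  have "lk (lin_ext f u) y = (\<Sum>x\<in>Poly_Mapping.keys u. \<Sum>z\<in>Poly_Mapping.keys (f x). if z = y then lk (f x) z * lk u x else 0)"
    unfolding lin_ext_def lookup_sum by (intro sum.cong refl) (simp add: lookup_single when_def mult.commute)
  also have "\<dots> = (\<Sum>x\<in>Poly_Mapping.keys u. lk (f x) y * lk u x)"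
    by (intro sum.cong refl collapse)
  finally show ?thesis by (simp add: mult.commute)
qed

lemma lookup_tens: "lk (tens p q) (i, j) = lk p i * lk q j"
proof -
  have "lk (tens p q) (i, j) = (\<Sum>a\<in>Poly_Mapping.keys p. \<Sum>b\<in>Poly_Mapping.keys q. if a = i \<and> b = j then lk p a * lk q b else 0)"
    unfolding tens_def lookup_sum by (intro sum.cong refl) (simp add: lookup_single when_def)
  also have "\<dots> = lk p i * lk q j"
    by (simp add: collapse2 in_keys_iff)
  finally show ?thesis .
qed


lemma lookup_single_mult:
  fixes p :: "'a::ab_group_add \<Rightarrow>\<^sub>0 'k::field"
  shows "lk (Poly_Mapping.single k c * p) x = c * lk p (x - k)"
proof -
  have "lk (Poly_Mapping.single k c * p) x = (\<Sum>l. (c when k = l) * (\<Sum>q. lk p q when x = l + q))"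
    by (simp add: lookup_mult lookup_single)
  also have "\<dots> = (\<Sum>l. (c * (\<Sum>q. lk p q when x = l + q)) when l = k)"
    by (rule Sum_any.cong) (auto simp: when_def)
  also have "\<dots> = c * (\<Sum>q. lk p q when x = k + q)" by (rule Sum_any_when_equal)
  also have "(\<Sum>q. lk p q when x = k + q) = (\<Sum>q. lk p q when q = x - k)"
    by (rule Sum_any.cong) (auto simp: when_def algebra_simps)
  finally show ?thesis by simp
qed

lemma lookup_mult_single:
  fixes p :: "'a::ab_group_add \<Rightarrow>\<^sub>0 'k::field"
  shows "lk (p * Poly_Mapping.single k c) x = lk p (x - k) * c"
proof -
  have eq: "p * Poly_Mapping.single k c = Poly_Mapping.single k c * p" by (rule mult.commute)
  show ?thesis unfolding eq lookup_single_mult by (rule mult.commute)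
qed


definition sg :: "int \<Rightarrow> int \<Rightarrow> 'k::field" where
  "sg i j = (if 0 \<le> i \<and> 0 \<le> j then 1 else if i < 0 \<and> j < 0 then -1 else 0)"

lemma lk_gpow: "lk (gpow n :: 'k::field kF) m = (if n = m then 1 else 0)"
  by (simp add: gpow_def lookup_single when_def)

lemma tens_single: "tens (Poly_Mapping.single a (c::'k::field)) (Poly_Mapping.single b d) = Poly_Mapping.single (a,b) (c*d)"
proof (rule poly_mapping_eqI)
  fix k :: "'a \<times> 'b"
  obtain i j where k: "k = (i,j)" by fastforce
  show "lk (tens (Poly_Mapping.single a c) (Poly_Mapping.single b d)) k = lk (Poly_Mapping.single (a, b) (c * d)) k"
    unfolding k lookup_tens by (simp add: lookup_single when_def)
qed

lemma tens_gpow1: "tens (gpow n) (1::'k::field kF) = Poly_Mapping.single (n,0) 1"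
  unfolding gpow_def single_one[symmetric] tens_single by simp

lemma tens_1gpow: "tens (1::'k::field kF) (gpow n) = Poly_Mapping.single (0,n) 1"
  unfolding gpow_def single_one[symmetric] tens_single by simp

lemma tens_gpow2: "tens (gpow m) (gpow n :: 'k::field kF) = Poly_Mapping.single (m,n) 1"
  unfolding gpow_def tens_single by simp

lemma delta_pos_lk:
  "lk (delta_pos (Suc k) :: 'k::field kF2) (i,j) = (if i + j = int k \<and> 0 \<le> i \<and> 0 \<le> j then 1 else 0)"
proof (induction k arbitrary: i j)
  case 0
  then show ?case by (auto simp: tens_gpow2 lookup_single when_def)
next
  case (Suc k)
  have "lk (delta_pos (Suc (Suc k)) :: 'k::field kF2) (i,j) =
        lk (delta_pos (Suc k) :: 'k::field kF2) (i - 1, j) + (if (0, int (Suc k)) = (i, j) then 1 else 0)"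
    by (simp add: tens_gpow1 tens_gpow2 lookup_add lookup_single_mult lookup_single when_def)
  also have "\<dots> = (if i + j = int (Suc k) \<and> 0 \<le> i \<and> 0 \<le> j then 1 else 0)"
    unfolding Suc.IH by auto
  finally show ?case .
qed

lemma delta_basis_lk:
  "lk (delta_basis n :: 'k::field kF2) (i,j) = (if i + j = n - 1 then sg i j else 0)"
proof -
  consider "n = 0" | "n > 0" | "n = -1" | "n < -1" by linarith
  then show ?thesis
  proof cases
    case 1 then show ?thesis by (auto simp: delta_basis_def sg_def)
  next
    case 2
    define k where "k = nat n - 1"
    have e: "nat n = Suc k" "int k = n - 1" using 2 by (simp_all add: k_def)
    have "lk (delta_basis n :: 'k::field kF2) (i,j) = lk (delta_pos (Suc k) :: 'k::field kF2) (i, j)"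
      using 2 e by (simp add: delta_basis_def)
    also have "\<dots> = (if i + j = n - 1 then sg i j else 0)"
      unfolding delta_pos_lk e(2) using 2 by (auto simp: sg_def)
    finally show ?thesis .
  next
    case 3 then show ?thesis by (auto simp: delta_basis_def tens_gpow2 lookup_single when_def sg_def)
  next
    case 4
    define k where "k = nat (-n) - 1"
    have e: "nat (-n) = Suc k" "int k = -n - 1" using 4 by (simp_all add: k_def)
    have "lk (delta_basis n :: 'k::field kF2) (i,j) = - lk (delta_pos (Suc k) :: 'k::field kF2) (i - n, j - n)"
      using 4 e by (simp add: delta_basis_def tens_gpow1 tens_1gpow lookup_single_mult lookup_mult_single)
    also have "\<dots> = (if i + j = n - 1 then sg i j else 0)"
      unfolding delta_pos_lk e(2) using 4 by (auto simp: sg_def)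
    finally show ?thesis .
  qed
qed


lemma Delta_lk: "lk (Delta u :: 'k::field kF2) (i,j) = lk u (i+j+1) * sg i j"
proof -
  have "lk (Delta u :: 'k::field kF2) (i,j) = (\<Sum>x\<in>Poly_Mapping.keys u. if x = i+j+1 then lk u x * sg i j else 0)"
    unfolding Delta_def lookup_lin_ext by (intro sum.cong refl) (auto simp: delta_basis_lk)
  then show ?thesis by (simp only: collapse)
qed

lemma inner1: "lk (lin_ext (\<lambda>(s, t). Poly_Mapping.single (s, t, j) 1) (D :: 'k::field kF2)) (p,q,r) = (if j = r then lk D (p,q) else 0)"
proof -
  have "lk (lin_ext (\<lambda>(s, t). Poly_Mapping.single (s, t, j) 1) D) (p,q,r) = (\<Sum>y\<in>Poly_Mapping.keys D. if y = (p,q) then lk D y * (if j = r then 1 else 0) else 0)"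
    unfolding lookup_lin_ext by (intro sum.cong refl) (auto simp: lookup_single when_def split: prod.splits)
  then show ?thesis by (simp only: collapse) simp
qed

lemma inner2: "lk (lin_ext (\<lambda>(s, t). Poly_Mapping.single (i, s, t) 1) (D :: 'k::field kF2)) (p,q,r) = (if i = p then lk D (q,r) else 0)"
proof -
  have "lk (lin_ext (\<lambda>(s, t). Poly_Mapping.single (i, s, t) 1) D) (p,q,r) = (\<Sum>y\<in>Poly_Mapping.keys D. if y = (q,r) then lk D y * (if i = p then 1 else 0) else 0)"
    unfolding lookup_lin_ext by (intro sum.cong refl) (auto simp: lookup_single when_def split: prod.splits)
  then show ?thesis by (simp only: collapse) simp
qed

lemma Delta_id_lk: "lk (Delta_id (X :: 'k::field kF2)) (p,q,r) = lk X (p+q+1, r) * sg p q"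
proof -
  have "lk (Delta_id X) (p,q,r) = (\<Sum>x\<in>Poly_Mapping.keys X. if x = (p+q+1, r) then lk X x * sg p q else 0)"
    unfolding Delta_id_def lookup_lin_ext
    by (intro sum.cong refl) (auto simp: inner1 Delta_lk lk_gpow split: prod.splits)
  then show ?thesis by (simp only: collapse)
qed

lemma id_Delta_lk: "lk (id_Delta (X :: 'k::field kF2)) (p,q,r) = lk X (p, q+r+1) * sg q r"
proof -
  have "lk (id_Delta X) (p,q,r) = (\<Sum>x\<in>Poly_Mapping.keys X. if x = (p, q+r+1) then lk X x * sg q r else 0)"
    unfolding id_Delta_def lookup_lin_ext
    by (intro sum.cong refl) (auto simp: inner2 Delta_lk lk_gpow split: prod.splits)
  then show ?thesis by (simp only: collapse)
qed

lemma sg_assoc: "(sg (p+q+1) r * sg p q :: 'k::field) = sg p (q+r+1) * sg q r"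
  unfolding sg_def by auto

lemma coassoc: "Delta_id (Delta u) = id_Delta (Delta (u :: 'k::field kF))"
proof (rule poly_mapping_eqI)
  fix k :: "int \<times> int \<times> int"
  obtain p q r where k: "k = (p,q,r)" by (cases k) auto
  have "p + q + 1 + r + 1 = p + (q + r + 1) + 1" by simp
  then show "lk (Delta_id (Delta u)) k = lk (id_Delta (Delta u)) k"
    unfolding k Delta_id_lk id_Delta_lk Delta_lk using sg_assoc[of p q r, where 'k='k]
    by (simp add: mult.assoc)
qed


lemma sg_deriv: "i + j + 1 = m + n \<Longrightarrow> (sg i j :: 'k::field) = sg (i-m) j + sg i (j-n)"
  unfolding sg_def by auto

lemma deriv_single:
  "Delta (Poly_Mapping.single m c * Poly_Mapping.single n e :: 'k::field kF)
   = tens (Poly_Mapping.single m c) 1 * Delta (Poly_Mapping.single n e) + Delta (Poly_Mapping.single m c) * tens 1 (Poly_Mapping.single n e)"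
proof (rule poly_mapping_eqI)
  fix k :: "int \<times> int"
  obtain i j where k: "k = (i,j)" by (cases k) auto
  have t1: "tens (Poly_Mapping.single m c) (1 :: 'k kF) = Poly_Mapping.single (m,0) c"
    unfolding single_one[symmetric] tens_single by simp
  have t2: "tens (1 :: 'k kF) (Poly_Mapping.single n e) = Poly_Mapping.single (0,n) e"
    unfolding single_one[symmetric] tens_single by simp
  show "lk (Delta (Poly_Mapping.single m c * Poly_Mapping.single n e)) k =
        lk (tens (Poly_Mapping.single m c) 1 * Delta (Poly_Mapping.single n e) + Delta (Poly_Mapping.single m c) * tens 1 (Poly_Mapping.single n e)) k"
  proof (cases "i + j + 1 = m + n")
    case True
    then show ?thesis unfolding k t1 t2 mult_single lookup_add lookup_single_mult lookup_mult_single
      by (simp add: Delta_lk lookup_single when_def sg_deriv[OF True, where 'k='k] algebra_simps)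
  next
    case False
    then show ?thesis unfolding k t1 t2 mult_single lookup_add lookup_single_mult lookup_mult_single
      by (simp add: Delta_lk lookup_single when_def)
  qed
qed

lemma poly_rep: "u = (\<Sum>a\<in>Poly_Mapping.keys u. Poly_Mapping.single a (lk u a))"
proof (rule poly_mapping_eqI)
  fix k
  show "lk u k = lk (\<Sum>a\<in>Poly_Mapping.keys u. Poly_Mapping.single a (lk u a)) k"
    by (cases "k \<in> Poly_Mapping.keys u") (auto simp: lookup_sum lookup_single when_def sum.delta in_keys_iff)
qed

lemma Delta_sum: "Delta (\<Sum>a\<in>A. f a :: 'k::field kF) = (\<Sum>a\<in>A. Delta (f a))"
proof (rule poly_mapping_eqI)
  fix k :: "int \<times> int"
  obtain i j where k: "k = (i,j)" by (cases k) auto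
  show "lk (Delta (\<Sum>a\<in>A. f a)) k = lk (\<Sum>a\<in>A. Delta (f a)) k"
    unfolding k Delta_lk lookup_sum by (simp add: sum_distrib_right)
qed

lemma tens_sum1: "tens (\<Sum>a\<in>A. f a :: 'k::field kF) (1::'k kF) = (\<Sum>a\<in>A. tens (f a) 1)"
proof (rule poly_mapping_eqI)
  fix k :: "int \<times> int"
  obtain i j where k: "k = (i,j)" by (cases k) auto
  show "lk (tens (\<Sum>a\<in>A. f a) (1::'k kF)) k = lk (\<Sum>a\<in>A. tens (f a) 1) k"
    unfolding k lookup_tens lookup_sum by (simp add: sum_distrib_right)
qed

lemma tens_sum2: "tens (1::'k::field kF) (\<Sum>a\<in>A. f a :: 'k kF) = (\<Sum>a\<in>A. tens 1 (f a))"
proof (rule poly_mapping_eqI)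
  fix k :: "int \<times> int"
  obtain i j where k: "k = (i,j)" by (cases k) auto
  show "lk (tens (1::'k kF) (\<Sum>a\<in>A. f a)) k = lk (\<Sum>a\<in>A. tens 1 (f a)) k"
    unfolding k lookup_tens lookup_sum by (simp add: sum_distrib_left)
qed

lemma deriv: "Delta (u * v :: 'k::field kF) = tens u 1 * Delta v + Delta u * tens 1 v"
proof -
  define A where "A = Poly_Mapping.keys u"
  define B where "B = Poly_Mapping.keys v"
  define su where "su a = Poly_Mapping.single a (lk u a)" for a
  define sv where "sv b = Poly_Mapping.single b (lk v b)" for b
  have u: "u = (\<Sum>a\<in>A. su a)" unfolding A_def su_def by (rule poly_rep)
  have v: "v = (\<Sum>b\<in>B. sv b)" unfolding B_def sv_def by (rule poly_rep)
  have "Delta (u * v) = (\<Sum>a\<in>A. \<Sum>b\<in>B. Delta (su a * sv b))"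
    unfolding u v sum_product Delta_sum ..
  also have "\<dots> = (\<Sum>a\<in>A. \<Sum>b\<in>B. tens (su a) 1 * Delta (sv b) + Delta (su a) * tens 1 (sv b))"
    unfolding su_def sv_def deriv_single ..
  also have "\<dots> = tens u 1 * Delta v + Delta u * tens 1 v"
    unfolding u v tens_sum1 tens_sum2 Delta_sum sum_product sum.distrib ..
  finally show ?thesis .
qed

theorem lemma3p9:
  shows "(\<forall>u :: 'k::field kF. Delta_id (Delta u) = id_Delta (Delta u))
       \<and> (\<forall>u v :: 'k::field kF. Delta (u * v) = tens u 1 * Delta v + Delta u * tens 1 v)"
  using coassoc deriv by blast

end
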